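(* Let $m,n\in\mathbb{N}$ and $\epsilon>0$. Let $\alpha\in\mathbb{Z}_n$ and $f=\chi_\alpha:\mathbb{Z}_n\to\mathbb{C}$. Let $\ell:=\min(n,m)$ and let $g:\mathbb{Z}_m\to\mathbb{C}$ be defined by $g(x)=f(x)$ for $0\le x<\ell$ and $g(x)=0$ otherwise. Let $r=1/(2\epsilon)$ and $\Gamma'=\{\beta\in\mathbb{Z}_m: |\frac mn\alpha-\beta|_m\le r+1\}$. Then $\|g-g|_{\Gamma'}\|_2^2\le\epsilon$.
   Context: $\mathbb{Z}_n=\{0,\dots,n-1\}$ with addition mod $n$; elements are treated as these integer representatives. $\chi_{\alpha}(x)=\exp(2\pi i\alpha x/n)$ on $\mathbb{Z}_n$, and $\chi_{\beta,m}(x)=\exp(2\pi i\beta x/m)$ on $\mathbb{Z}_m$. On $\mathbb{Z}_m$: $\langle h_1,h_2\rangle=\frac1m\sum_x h_1(x)\overline{h_2(x)}$, $\|h\|_2^2=\langle h,h\rangle$, $\widehat h(\beta)=\langle h,\chi_{\beta,m}\rangle$, and for $\Gamma'\subseteq\mathbb{Z}_m$, $h|_{\Gamma'}=\sum_{\beta\in\Gamma'}\widehat h(\beta)\chi_{\beta,m}$. For $k\in\mathbb{N}$, $x\in\mathbb{R}$: $|x|_k=\min\{|x-kz|:z\in\mathbb{Z}\}$. *)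

theory Defs
  imports Complex_Main
begin

text \<open>Z_k is modelled by the representatives {0..<k} (as nat); functions on Z_k are
  functions nat \<Rightarrow> complex of which only the values on {0..<k} matter.\<close>

definition chi :: "nat \<Rightarrow> nat \<Rightarrow> nat \<Rightarrow> complex" where
  "chi k a x = exp (2 * pi * \<i> * of_nat a * of_nat x / of_nat k)"

definition zinner :: "nat \<Rightarrow> (nat \<Rightarrow> complex) \<Rightarrow> (nat \<Rightarrow> complex) \<Rightarrow> complex" where
  "zinner k h1 h2 = (1 / of_nat k) * (\<Sum>x<k. h1 x * cnj (h2 x))"

definition znorm2sq :: "nat \<Rightarrow> (nat \<Rightarrow> complex) \<Rightarrow> real" where
  "znorm2sq k h = Re (zinner k h h)"

definition zhat :: "nat \<Rightarrow> (nat \<Rightarrow> complex) \<Rightarrow> nat \<Rightarrow> complex" where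
  "zhat k h b = zinner k h (chi k b)"

definition zrestrict :: "nat \<Rightarrow> nat set \<Rightarrow> (nat \<Rightarrow> complex) \<Rightarrow> (nat \<Rightarrow> complex)" where
  "zrestrict k G h = (\<lambda>x. \<Sum>b\<in>G. zhat k h b * chi k b x)"

definition cycabs :: "nat \<Rightarrow> real \<Rightarrow> real" where
  "cycabs k x = Inf {\<bar>x - real k * of_int z\<bar> | z. True}"

end

theory Submission imports Defs "HOL-Analysis.Analysis" begin

lemma jordan:
  fixes u :: real assumes "0 \<le> u" "u \<le> pi/2" shows "2*u/pi \<le> sin u"
proof -
  have cv: "convex_on {0..pi/2} (\<lambda>x. - sin x)"
    by (rule convex_on_realI[where f' = "\<lambda>x. - cos x"])
       (auto intro!: derivative_eq_intros cos_monotone_0_pi_le)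
  define t where "t = 2*u/pi"
  have t01: "0 \<le> t" "t \<le> 1" using assms pi_gt_zero by (auto simp: t_def field_simps)
  have "- sin ((1 - t) *\<^sub>R 0 + t *\<^sub>R (pi/2)) \<le> (1 - t) * (- sin 0) + t * (- sin (pi/2))"
    by (rule convex_onD[OF cv]) (use t01 in auto)
  moreover have "(1 - t) *\<^sub>R 0 + t *\<^sub>R (pi/2) = u" by (simp add: t_def)
  ultimately show ?thesis by (simp add: t_def)
qed

lemma jordan2:
  fixes u :: real assumes "0 \<le> u" "u \<le> pi" shows "2*min u (pi - u)/pi \<le> sin u"
proof (cases "u \<le> pi/2")
  case True then show ?thesis using jordan[of u] assms by (simp add: min_def)
next
  case False
  have "2*(pi-u)/pi \<le> sin (pi - u)" using jordan[of "pi - u"] assms False by simp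
  then show ?thesis using False by (simp add: min_def)
qed

lemma root_sum:
  assumes "0 < m"
  shows "(\<Sum>x<m. exp (2*pi*\<i> * of_int k * of_nat x/of_nat m)) = (if int m dvd k then of_nat m else 0)"
proof -
  define z where "z = exp (2*pi*\<i> * of_int k/of_nat m)"
  have t: "exp (2*pi*\<i> * of_int k * of_nat x/of_nat m) = z ^ x" for x :: nat
  proof -
    have "2*pi*\<i> * of_int k * of_nat x/of_nat m = of_nat x * (2*pi*\<i> * of_int k/of_nat m)" by simp
    then show ?thesis by (simp only: z_def exp_of_nat_mult)
  qed
  have zm: "z ^ m = 1"
  proof -
    have "z ^ m = exp (of_nat m * (2*pi*\<i> * of_int k/of_nat m))" by (simp only: z_def exp_of_nat_mult)
    also have "of_nat m * (2*pi*\<i> * of_int k/of_nat m) = \<i> * (of_int k * (of_real pi * 2))"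
      using assms by (simp add: field_simps)
    finally show ?thesis by simp
  qed
  show ?thesis
  proof (cases "int m dvd k")
    case True
    then obtain j where j: "k = int m * j" by (auto elim: dvdE)
    have "z = exp (\<i> * (of_int j * (of_real pi * 2)))" unfolding z_def j using assms
      by (simp add: field_simps)
    then have "z = 1" by simp
    then show ?thesis using True by (simp only: t) simp
  next
    case False
    have "z \<noteq> 1"
    proof
      assume "z = 1"
      then obtain q :: int where q: "Im (2*pi*\<i> * of_int k/of_nat m) = of_int (2*q) * pi"
        unfolding z_def exp_eq_1 by blast
      have "Im (2*pi*\<i> * of_int k/of_nat m) = 2*pi * of_int k/of_nat m"
        by (simp add: Im_divide_of_nat)
      with q have "2*pi * of_int k/of_nat m = 2 * of_int q * pi" by simp
      then have "real_of_int k = of_int q * real m" using assms pi_gt_zero by (simp add: field_simps)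
      then have "k = q * int m" by (metis of_int_eq_iff of_int_mult of_int_of_nat_eq)
      then show False using False by simp
    qed
    then show ?thesis using False by (simp only: t) (simp add: sum_gp_strict zm)
  qed
qed


lemma chi_sym: "chi k a x = chi k x a"
  unfolding chi_def by (simp add: mult.commute mult.left_commute)

lemma dvd_diff_less:
  fixes a b m :: nat assumes "a < m" "b < m"
  shows "int m dvd (int a - int b) \<longleftrightarrow> a = b"
proof
  assume "int m dvd (int a - int b)"
  then obtain q where q: "int a - int b = int m * q" by (auto elim: dvdE)
  show "a = b"
  proof (cases "q = 0")
    case True then show ?thesis using q by simp
  next
    case False
    then have "q \<ge> 1 \<or> q \<le> -1" by linarith
    then show ?thesis
    proof
      assume "q \<ge> 1" then have "int m * q \<ge> int m" using mult_left_mono[of 1 q "int m"] by simp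
      then show ?thesis using q assms by linarith
    next
      assume "q \<le> -1" then have "int m * q \<le> - int m" using mult_left_mono[of q "-1" "int m"] by simp
      then show ?thesis using q assms by linarith
    qed
  qed
qed simp

lemma orth:
  assumes "a < m" "b < m"
  shows "(\<Sum>x<m. chi m a x * cnj (chi m b x)) = (if a = b then of_nat m else 0)"
proof -
  have m: "0 < m" using assms by simp
  have e: "chi m a x * cnj (chi m b x) = exp (2*pi*\<i> * of_int (int a - int b) * of_nat x/of_nat m)" for x
  proof -
    have "chi m a x * cnj (chi m b x) = exp (2*pi*\<i> * of_nat a * of_nat x/of_nat m + cnj (2*pi*\<i> * of_nat b * of_nat x/of_nat m))"
      unfolding chi_def by (simp add: exp_cnj exp_diff exp_minus divide_inverse)
    also have "2*pi*\<i> * of_nat a * of_nat x/of_nat m + cnj (2*pi*\<i> * of_nat b * of_nat x/of_nat m)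
       = 2*pi*\<i> * of_int (int a - int b) * of_nat x/of_nat m"
      using m by (simp add: field_simps)
    finally show ?thesis .
  qed
  show ?thesis by (simp only: e root_sum[OF m] dvd_diff_less[OF assms])
qed

lemma parseval:
  assumes "0 < m"
  shows "(\<Sum>b<m. zhat m h b * cnj (zhat m h b)) = zinner m h h"
proof -
  have "(\<Sum>b<m. zhat m h b * cnj (zhat m h b))
      = (\<Sum>b<m. (1/of_nat m)^2 * (\<Sum>x<m. \<Sum>y<m. h x * cnj (h y) * (chi m y b * cnj (chi m x b))))"
  proof (rule sum.cong[OF refl])
    fix b
    have "zhat m h b * cnj (zhat m h b) = (1/of_nat m)^2 * ((\<Sum>x<m. h x * cnj (chi m b x)) * (\<Sum>y<m. cnj (h y) * chi m b y))"
      by (simp add: zhat_def zinner_def power2_eq_square)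
    also have "(\<Sum>x<m. h x * cnj (chi m b x)) * (\<Sum>y<m. cnj (h y) * chi m b y) =
        (\<Sum>x<m. \<Sum>y<m. h x * cnj (h y) * (chi m y b * cnj (chi m x b)))"
      by (simp add: sum_product chi_sym mult_ac)
    finally show "zhat m h b * cnj (zhat m h b) = (1/of_nat m)^2 * (\<Sum>x<m. \<Sum>y<m. h x * cnj (h y) * (chi m y b * cnj (chi m x b)))" .
  qed
  also have "\<dots> = (1/of_nat m)^2 * (\<Sum>x<m. \<Sum>y<m. h x * cnj (h y) * (\<Sum>b<m. chi m y b * cnj (chi m x b)))"
  proof -
    have "(\<Sum>b<m. \<Sum>x<m. \<Sum>y<m. h x * cnj (h y) * (chi m y b * cnj (chi m x b)))
       = (\<Sum>x<m. \<Sum>b<m. \<Sum>y<m. h x * cnj (h y) * (chi m y b * cnj (chi m x b)))"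
      by (rule sum.swap)
    also have "\<dots> = (\<Sum>x<m. \<Sum>y<m. \<Sum>b<m. h x * cnj (h y) * (chi m y b * cnj (chi m x b)))"
      by (rule sum.cong[OF refl], rule sum.swap)
    also have "\<dots> = (\<Sum>x<m. \<Sum>y<m. h x * cnj (h y) * (\<Sum>b<m. chi m y b * cnj (chi m x b)))"
      by (simp only: sum_distrib_left)
    finally have eq: "(\<Sum>b<m. \<Sum>x<m. \<Sum>y<m. h x * cnj (h y) * (chi m y b * cnj (chi m x b)))
      = (\<Sum>x<m. \<Sum>y<m. h x * cnj (h y) * (\<Sum>b<m. chi m y b * cnj (chi m x b)))" .
    show ?thesis by (simp only: sum_distrib_left[symmetric, of "(1/of_nat m)^2"] eq)
  qed
  also have "\<dots> = (1/of_nat m)^2 * (\<Sum>x<m. h x * cnj (h x) * of_nat m)"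
    by (intro arg_cong[where f="\<lambda>t. (1/of_nat m)^2 * t"] sum.cong refl)
       (simp add: orth if_distrib sum.delta cong: if_cong)
  also have "\<dots> = zinner m h h"
    using assms by (simp add: zinner_def sum_distrib_left power2_eq_square field_simps)
  finally show ?thesis .
qed

lemma zhat_diff_restrict:
  assumes "\<Gamma> \<subseteq> {..<m}" "\<beta> < m"
  shows "zhat m (\<lambda>x. g x - zrestrict m \<Gamma> g x) \<beta> = (if \<beta> \<in> \<Gamma> then 0 else zhat m g \<beta>)"
proof -
  have m: "0 < m" using assms by simp
  have "zhat m (zrestrict m \<Gamma> g) \<beta> = (\<Sum>b\<in>\<Gamma>. zhat m g b * ((1/of_nat m) * (\<Sum>x<m. chi m b x * cnj (chi m \<beta> x))))"
  proof -
    have "zhat m (zrestrict m \<Gamma> g) \<beta> = (1/of_nat m) * (\<Sum>x<m. \<Sum>b\<in>\<Gamma>. zhat m g b * (chi m b x * cnj (chi m \<beta> x)))"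
      unfolding zhat_def[of m "zrestrict m \<Gamma> g"] zinner_def
      unfolding zrestrict_def
      by (simp add: sum_distrib_left sum_distrib_right mult_ac)
    also have "\<dots> = (1/of_nat m) * (\<Sum>b\<in>\<Gamma>. \<Sum>x<m. zhat m g b * (chi m b x * cnj (chi m \<beta> x)))"
      by (subst sum.swap) (rule refl)
    also have "\<dots> = (\<Sum>b\<in>\<Gamma>. zhat m g b * ((1/of_nat m) * (\<Sum>x<m. chi m b x * cnj (chi m \<beta> x))))"
      by (simp only: sum_distrib_left mult_ac)
    finally show ?thesis .
  qed
  also have "\<dots> = (\<Sum>b\<in>\<Gamma>. if b = \<beta> then zhat m g \<beta> else 0)"
    by (intro sum.cong refl) (use assms m in \<open>auto simp: orth\<close>)
  also have "\<dots> = (if \<beta> \<in> \<Gamma> then zhat m g \<beta> else 0)"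
    using assms by (simp add: sum.delta' finite_subset[OF assms(1)])
  finally have r: "zhat m (zrestrict m \<Gamma> g) \<beta> = (if \<beta> \<in> \<Gamma> then zhat m g \<beta> else 0)" .
  have "zhat m (\<lambda>x. g x - zrestrict m \<Gamma> g x) \<beta> = zhat m g \<beta> - zhat m (zrestrict m \<Gamma> g) \<beta>"
    by (simp add: zhat_def zinner_def sum_subtractf ring_distribs)
  then show ?thesis using r by simp
qed


lemma sep_sum_aux:
  fixes v :: "'a \<Rightarrow> real"
  assumes "finite I" "R > 1"
  shows "(\<forall>i\<in>I. \<forall>j\<in>I. i \<noteq> j \<longrightarrow> 1 \<le> \<bar>v i - v j\<bar>) \<longrightarrow> (\<forall>T. (\<forall>i\<in>I. v i \<le> T) \<longrightarrow>
     (\<Sum>i\<in>I. if v i > R then 1/(v i)^2 else 0) \<le> 1/(R-1) - 1/max (R-1) T)"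
  using assms(1)
proof (induction I rule: finite_ranking_induct[where f = v])
  case empty
  then show ?case using assms(2) by (auto simp: field_simps max_def)
next
  case (insert x S)
  show ?case
  proof (cases "x \<in> S")
    case True then show ?thesis using insert by (simp add: insert_absorb)
  next
    case xS: False
    show ?thesis
    proof (intro impI allI)
      fix T
      assume sep: "\<forall>i\<in>insert x S. \<forall>j\<in>insert x S. i \<noteq> j \<longrightarrow> 1 \<le> \<bar>v i - v j\<bar>"
         and T: "\<forall>i\<in>insert x S. v i \<le> T"
      have le: "v y \<le> v x - 1" if "y \<in> S" for y
      proof -
        have "y \<noteq> x" using that xS by blast
        then have "1 \<le> \<bar>v y - v x\<bar>" using sep that by blast
        then show ?thesis using insert(2)[OF that] by (simp add: abs_if split: if_splits)
      qed
      have IH: "(\<Sum>i\<in>S. if v i > R then 1/(v i)^2 else 0) \<le> 1/(R-1) - 1/max (R-1) (v x - 1)"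
        using insert(3) sep le by auto
      have Tx: "v x \<le> T" using T by auto
      have sumeq: "(\<Sum>i\<in>insert x S. if v i > R then 1/(v i)^2 else 0)
          = (if v x > R then 1/(v x)^2 else 0) + (\<Sum>i\<in>S. if v i > R then 1/(v i)^2 else 0)"
        using insert(1) xS by simp
      show "(\<Sum>i\<in>insert x S. if v i > R then 1/(v i)^2 else 0) \<le> 1/(R-1) - 1/max (R-1) T"
      proof (cases "v x > R")
        case True
        have mx: "max (R-1) (v x - 1) = v x - 1" using True by simp
        have "1/(v x)^2 \<le> 1/(v x - 1) - 1/(v x)" using True assms(2)
          by (simp add: field_simps power2_eq_square)
        moreover have "1/max (R-1) T \<le> 1/ v x" using True assms(2) Tx
          by (intro divide_left_mono) auto
        ultimately show ?thesis using IH sumeq True mx by simp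
      next
        case False
        have mx: "max (R-1) (v x - 1) = R - 1" using False by simp
        have "1/max (R-1) T \<le> 1/(R-1)" using assms(2)
          by (intro divide_left_mono) auto
        then show ?thesis using IH sumeq False mx by simp
      qed
    qed
  qed
qed

lemma sep_sum:
  fixes v :: "'a \<Rightarrow> real"
  assumes "finite I" "R > 1" "\<forall>i\<in>I. \<forall>j\<in>I. i \<noteq> j \<longrightarrow> 1 \<le> \<bar>v i - v j\<bar>"
  shows "(\<Sum>i\<in>I. if v i > R then 1/(v i)^2 else 0) \<le> 1/(R-1)"
proof -
  have "(\<Sum>i\<in>I. if v i > R then 1/(v i)^2 else 0) \<le> 1/(R-1) - 1/max (R-1) (R-1 + (\<Sum>i\<in>I. \<bar>v i\<bar>))"
  proof -
    have "\<forall>i\<in>I. v i \<le> R-1 + (\<Sum>i\<in>I. \<bar>v i\<bar>)"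
    proof
      fix i assume i: "i \<in> I"
      have "\<bar>v i\<bar> \<le> (\<Sum>i\<in>I. \<bar>v i\<bar>)" by (rule member_le_sum) (use i assms(1) in auto)
      then show "v i \<le> R-1 + (\<Sum>i\<in>I. \<bar>v i\<bar>)" using assms(2) abs_ge_self[of "v i"] by linarith
    qed
    then show ?thesis using sep_sum_aux[OF assms(1,2), of v] assms(3) by blast
  qed
  also have "\<dots> \<le> 1/(R-1)" using assms(2) by (simp add: max_def)
  finally show ?thesis .
qed


lemma cmod_1_minus_exp:
  fixes s :: real
  shows "cmod (1 - exp (\<i> * of_real s)) = 2 * \<bar>sin (s/2)\<bar>"
proof -
  have e: "exp (\<i> * of_real s) = cis s" by (simp add: cis_conv_exp mult.commute)
  have "(cmod (1 - exp (\<i> * of_real s)))^2 = (1 - cos s)^2 + (sin s)^2"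
    unfolding e cmod_power2 by simp
  also have "\<dots> = 2 - 2 * cos s" using sin_cos_squared_add[of s] by (simp add: power2_eq_square algebra_simps)
  also have "cos s = 1 - 2 * sin (s/2) ^ 2" using cos_double_sin[of "s/2"] by simp
  finally have "(cmod (1 - exp (\<i> * of_real s)))^2 = (2 * \<bar>sin (s/2)\<bar>)^2"
    by (simp add: power2_eq_square)
  then show ?thesis by (subst (asm) power2_eq_iff_nonneg) auto
qed

lemma ghat_bound:
  fixes m n \<alpha> \<beta> :: nat and e :: int and y :: real
  assumes "0 < m" "0 < n" "\<alpha> < n" "\<beta> < m"
    and g: "g = (\<lambda>x. if x < min n m then chi n \<alpha> x else 0)"
    and y: "y = real \<beta> - real m / real n * real \<alpha> + real m * of_int e"
    and "0 < y" "y < m"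
  shows "cmod (zhat m g \<beta>) \<le> 1/(2 * min y (real m - y))"
proof -
  define s where "s = -(2*pi*y/m)"
  define w where "w = exp (\<i> * of_real s)"
  define l where "l = min n m"
  have tm: "chi n \<alpha> x * cnj (chi m \<beta> x) = w ^ x" for x
  proof -
    have "w ^ x = exp (of_nat x * (\<i> * of_real s))" unfolding w_def by (simp only: exp_of_nat_mult)
    also have "\<dots> = exp (of_nat x * (\<i> * of_real s) + \<i> * (of_int (e * int x) * (of_real pi * 2)))"
      by (rule exp_plus_2pin[symmetric])
    also have "of_nat x * (\<i> * of_real s) + \<i> * (of_int (e * int x) * (of_real pi * 2))
       = 2*pi*\<i> * of_nat \<alpha> * of_nat x/of_nat n + cnj (2*pi*\<i> * of_nat \<beta> * of_nat x/of_nat m)"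
      using assms(1,2) unfolding s_def y by (simp add: field_simps)
    finally show ?thesis unfolding chi_def by (simp add: exp_cnj exp_diff exp_minus divide_inverse)
  qed
  have zh: "zhat m g \<beta> = (1/of_nat m) * (\<Sum>x<l. w^x)"
  proof -
    have "(\<Sum>x<m. g x * cnj (chi m \<beta> x)) = (\<Sum>x\<in>{..<m} \<inter> {x. x < l}. chi n \<alpha> x * cnj (chi m \<beta> x))"
      by (subst sum.inter_restrict) (auto simp: g l_def intro!: sum.cong)
    also have "{..<m} \<inter> {x. x < l} = {..<l}" by (auto simp: l_def)
    finally show ?thesis unfolding zhat_def zinner_def by (simp add: tm)
  qed
  have u: "0 < pi * y / m" "pi * y / m < pi" using assms(1,7,8) pi_gt_zero by (auto simp: field_simps)
  have sinpos: "sin (pi * y / m) > 0" using sin_gt_zero[OF u] .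
  have cw: "cmod (1 - w) = 2 * sin (pi * y / m)"
    unfolding w_def cmod_1_minus_exp s_def using sinpos by simp
  have w1: "w \<noteq> 1" using cw sinpos by auto
  have geo: "(\<Sum>x<l. w^x) = (1 - w^l)/(1 - w)" using w1 by (simp add: sum_gp_strict)
  have nw: "cmod w = 1" unfolding w_def by simp
  have num: "cmod (1 - w^l) \<le> 2"
    using norm_triangle_ineq4[of 1 "w^l"] by (simp add: norm_power nw)
  define mn where "mn = min y (real m - y)"
  have mnpos: "mn > 0" using assms(7,8) by (simp add: mn_def)
  have "min (pi * y / m) (pi - pi * y / m) = (pi / m) * mn"
  proof -
    have "pi - pi * y / m = (pi/m) * (real m - y)" using assms(1) by (simp add: field_simps)
    then show ?thesis unfolding mn_def using pi_gt_zero
      by (simp add: min_mult_distrib_left)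
  qed
  then have "2 * ((pi / m) * mn) / pi \<le> sin (pi * y / m)"
    using jordan2[of "pi * y / m"] u by simp
  then have "2 * mn / m \<le> sin (pi * y / m)" using pi_gt_zero by (simp add: field_simps)
  then have den: "4 * mn / m \<le> cmod (1 - w)" unfolding cw by simp
  have dpos: "0 < 4 * mn / m" using mnpos assms(1) by simp
  have "cmod (zhat m g \<beta>) = (1/m) * (cmod (1 - w^l) / cmod (1 - w))"
    unfolding zh geo by (simp add: norm_divide norm_mult)
  also have "\<dots> \<le> (1/m) * (2 / (4 * mn / m))"
    by (intro mult_left_mono frac_le num den dpos) auto
  also have "\<dots> = 1/(2*mn)" using assms(1) mnpos by (simp add: field_simps)
  finally show ?thesis unfolding mn_def .
qed


theorem proposition4p1:
  fixes m n \<alpha> :: nat and \<epsilon> :: real and g :: "nat \<Rightarrow> complex" and \<Gamma> :: "nat set"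
  assumes "0 < m" and "0 < n" and "0 < \<epsilon>" and "\<alpha> < n"
    and "g = (\<lambda>x. if x < min n m then chi n \<alpha> x else 0)"
    and "\<Gamma> = {\<beta>. \<beta> < m \<and>
           cycabs m (real m / real n * real \<alpha> - real \<beta>) \<le> 1 / (2 * \<epsilon>) + 1}"
  shows "znorm2sq m (\<lambda>x. g x - zrestrict m \<Gamma> g x) \<le> \<epsilon>"
proof -
  define c where "c = real m / real n * real \<alpha>"
  define e where "e = (\<lambda>b::nat. if c \<le> real b then (0::int) else 1)"
  define y where "y = (\<lambda>b::nat. real b - c + real m * of_int (e b))"
  define R where "R = 1/(2*\<epsilon>) + 1"
  have R1: "R > 1" using assms(3) by (simp add: R_def)
  have c0: "0 \<le> c" by (simp add: c_def)
  have cm: "c < m"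
  proof -
    have "real \<alpha> / real n < 1" using assms(2,4) by simp
    then have "real m * (real \<alpha> / real n) < real m * 1" using assms(1) by (intro mult_strict_left_mono) auto
    then show ?thesis by (simp add: c_def)
  qed
  have y01: "0 \<le> y b \<and> y b < m" if "b < m" for b
    using that c0 cm by (auto simp: y_def e_def)
  have sep: "\<forall>b\<in>{..<m}. \<forall>b'\<in>{..<m}. b \<noteq> b' \<longrightarrow> 1 \<le> \<bar>y b - y b'\<bar>"
  proof (intro ballI impI)
    fix b b' assume b: "b \<in> {..<m}" and b': "b' \<in> {..<m}" and ne: "b \<noteq> b'"
    define k where "k = int b - int b' + int m * (e b - e b')"
    have yk: "y b - y b' = of_int k" by (simp add: y_def k_def algebra_simps)
    have "k \<noteq> 0"
    proof (cases "e b = e b'")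
      case True then show ?thesis using ne by (simp add: k_def)
    next
      case False
      then have "e b - e b' = 1 \<or> e b - e b' = -1" by (auto simp: e_def split: if_splits)
      then show ?thesis using b b' by (auto simp: k_def)
    qed
    then have "1 \<le> \<bar>k\<bar>" by linarith
    then show "1 \<le> \<bar>y b - y b'\<bar>" unfolding yk by (metis of_int_1_le_iff of_int_abs)
  qed
  have sep2: "\<forall>b\<in>{..<m}. \<forall>b'\<in>{..<m}. b \<noteq> b' \<longrightarrow> 1 \<le> \<bar>(real m - y b) - (real m - y b')\<bar>"
    using sep by (simp add: abs_minus_commute)
  have cyc: "cycabs m (c - real b) \<le> y b \<and> cycabs m (c - real b) \<le> real m - y b" if "b < m" for b
  proof -
    let ?X = "{\<bar>(c - real b) - real m * of_int z\<bar> | z. True}"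
    have bdd: "bdd_below ?X" by (rule bdd_belowI[of _ 0]) auto
    have "\<bar>(c - real b) - real m * of_int (e b)\<bar> \<in> ?X" by blast
    moreover have "\<bar>(c - real b) - real m * of_int (e b)\<bar> = y b" using y01[OF that] by (simp add: y_def)
    moreover have "\<bar>(c - real b) - real m * of_int (e b - 1)\<bar> \<in> ?X" by blast
    moreover have "\<bar>(c - real b) - real m * of_int (e b - 1)\<bar> = real m - y b" using y01[OF that]
      by (simp add: y_def algebra_simps)
    ultimately show ?thesis unfolding cycabs_def by (metis cInf_lower bdd)
  qed
  have Gsub: "\<Gamma> \<subseteq> {..<m}" using assms(6) by auto
  have hn: "znorm2sq m (\<lambda>x. g x - zrestrict m \<Gamma> g x) = (\<Sum>b<m. if b \<in> \<Gamma> then 0 else (cmod (zhat m g b))^2)"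
  proof -
    have "znorm2sq m (\<lambda>x. g x - zrestrict m \<Gamma> g x)
      = Re (\<Sum>b<m. zhat m (\<lambda>x. g x - zrestrict m \<Gamma> g x) b * cnj (zhat m (\<lambda>x. g x - zrestrict m \<Gamma> g x) b))"
      unfolding znorm2sq_def parseval[OF assms(1)] ..
    also have "\<dots> = Re (\<Sum>b<m. of_real (if b \<in> \<Gamma> then 0 else (cmod (zhat m g b))^2))"
      by (intro arg_cong[where f=Re] sum.cong refl)
         (simp add: zhat_diff_restrict[OF Gsub] complex_mult_cnj cmod_power2)
    also have "\<dots> = (\<Sum>b<m. if b \<in> \<Gamma> then 0 else (cmod (zhat m g b))^2)"
      by (simp only: Re_sum Re_complex_of_real)
    finally show ?thesis .
  qed
  define A where "A = (\<lambda>b. if y b > R then 1/(y b)^2 else 0)"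
  define B where "B = (\<lambda>b. if real m - y b > R then 1/(real m - y b)^2 else 0)"
  have bnd: "(if b \<in> \<Gamma> then 0 else (cmod (zhat m g b))^2) \<le> (1/4) * (A b + B b)" if b: "b < m" for b
  proof (cases "b \<in> \<Gamma>")
    case True then show ?thesis by (simp add: A_def B_def)
  next
    case False
    then have "cycabs m (c - real b) > R" using assms(6) b by (auto simp: c_def R_def)
    then have yR: "y b > R" "real m - y b > R" using cyc[OF b] by auto
    have yb: "0 < y b" "y b < m" using yR R1 by linarith+
    have gb: "cmod (zhat m g b) \<le> 1/(2 * min (y b) (real m - y b))"
      by (rule ghat_bound[OF assms(1,2,4) b assms(5) _ yb, of "e b"]) (simp add: y_def c_def)
    define mn where "mn = min (y b) (real m - y b)"
    have mnpos: "mn > 0" using yR R1 by (simp add: mn_def)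
    have "(cmod (zhat m g b))^2 \<le> (1/(2*mn))^2"
      using gb by (intro power_mono) (auto simp: mn_def)
    also have "\<dots> = (1/4) * (1/mn^2)" by (simp add: power2_eq_square)
    also have "1/mn^2 \<le> 1/(y b)^2 + 1/(real m - y b)^2"
    proof (cases "y b \<le> real m - y b")
      case True then show ?thesis by (simp add: mn_def)
    next
      case False then show ?thesis by (simp add: mn_def)
    qed
    then have "(1/4) * (1/mn^2) \<le> (1/4) * (1/(y b)^2 + 1/(real m - y b)^2)" by simp
    finally show ?thesis using False yR by (simp add: A_def B_def)
  qed
  have "znorm2sq m (\<lambda>x. g x - zrestrict m \<Gamma> g x) \<le> (\<Sum>b<m. (1/4) * (A b + B b))"
    unfolding hn by (rule sum_mono) (use bnd in auto)
  also have "\<dots> = (1/4) * ((\<Sum>b<m. A b) + (\<Sum>b<m. B b))"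
    by (simp only: sum_distrib_left[symmetric] sum.distrib)
  also have "\<dots> \<le> (1/4) * (1/(R-1) + 1/(R-1))"
  proof -
    have "(\<Sum>b<m. A b) \<le> 1/(R-1)" unfolding A_def by (rule sep_sum[OF _ R1 sep]) simp
    moreover have "(\<Sum>b<m. B b) \<le> 1/(R-1)" unfolding B_def by (rule sep_sum[OF _ R1 sep2]) simp
    ultimately show ?thesis by (intro mult_left_mono add_mono) auto
  qed
  also have "\<dots> = \<epsilon>" using assms(3) by (simp add: R_def)
  finally show ?thesis .
qed

end
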